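(* For any $x\in\mathbb{R}^d$, any probability measure $\mu$ on $\mathbb{R}^d$ (with mean $\bar\mu$) and any $r>0$, there exists a unique global strong solution $(X_t,t\ge0)$ of $\mathrm{d}X_t=\mathrm{d}B_t-g(t)\nabla V(X_t-\bar\mu_t)\,\mathrm{d}t$, $X_0=x$, where $\bar\mu_t=\frac{1}{r+t}\big(r\bar\mu+\int_0^tX_s\,\mathrm{d}s\big)$.
   Context: $B$ is a standard $d$-dimensional Brownian motion. The potential $V:\mathbb{R}^d\to[0,\infty)$ is $C^2$ and $V=W+\chi$, where $\chi$ is compactly supported with $\nabla\chi$ Lipschitz and there is $c>0$ with $\nabla^2W(x)\ge c\,\mathrm{Id}$ for all $x$; moreover there is $a>0$ with $\Delta V(x)\le a(1+V(x))$ for all $x$ and $|\nabla V(x)|^2/V(x)\to\infty$ as $|x|\to\infty$. $V$ has finitely many critical points; its local minima have positive definite Hessian, and at each other critical point $\nabla^2V$ has a negative eigenvalue. The function $g:[0,\infty)\to(0,\infty)$ is $C^1$ and non-decreasing. The measure $\mu$ is assumed to have a mean $\bar\mu$. *)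

theory Defs
  imports "HOL-Probability.Probability"
begin

text \<open>Standard Brownian motion in a Euclidean space (identified with R^d via an
orthonormal basis): B_0 = 0, all paths continuous on [0,oo), and for every finite
increasing time grid 0 <= t_0 < t_1 < ... < t_n the coordinates (w.r.t. the
orthonormal basis) of the increments are independent, each
N(0, t_(i+1) - t_i).\<close>

definition std_BM :: "'w measure \<Rightarrow> (real \<Rightarrow> 'w \<Rightarrow> 'a::euclidean_space) \<Rightarrow> bool" where
  "std_BM M B \<longleftrightarrow>
     prob_space M \<and>
     (\<forall>t\<ge>0. B t \<in> borel_measurable M) \<and>
     (\<forall>\<omega>\<in>space M. B 0 \<omega> = 0 \<and> continuous_on {0..} (\<lambda>t. B t \<omega>)) \<and>
     (\<forall>(ts::nat \<Rightarrow> real) n. (0 \<le> ts 0 \<and> (\<forall>i<n. ts i < ts (Suc i))) \<longrightarrow>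
        prob_space.indep_vars M (\<lambda>_. borel)
          (\<lambda>(i, b) \<omega>. (B (ts (Suc i)) \<omega> - B (ts i) \<omega>) \<bullet> b) ({..<n} \<times> Basis) \<and>
        (\<forall>i<n. \<forall>b\<in>Basis.
           distributed M lborel (\<lambda>\<omega>. (B (ts (Suc i)) \<omega> - B (ts i) \<omega>) \<bullet> b)
             (\<lambda>y. ennreal (normal_density 0 (sqrt (ts (Suc i) - ts i)) y))))"

definition BM_filtration :: "'w measure \<Rightarrow> (real \<Rightarrow> 'w \<Rightarrow> 'a::euclidean_space) \<Rightarrow> real \<Rightarrow> 'w set set" where
  "BM_filtration M B t = sigma_sets (space M)
     ({B s -` A \<inter> space M | s A. 0 \<le> s \<and> s \<le> t \<and> A \<in> sets borel} \<union> null_sets M)"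

definition strong_solution ::
  "'w measure \<Rightarrow> (real \<Rightarrow> 'w \<Rightarrow> 'a::euclidean_space) \<Rightarrow> (real \<Rightarrow> real) \<Rightarrow> ('a \<Rightarrow> 'a)
   \<Rightarrow> 'a \<Rightarrow> 'a \<Rightarrow> real \<Rightarrow> (real \<Rightarrow> 'w \<Rightarrow> 'a) \<Rightarrow> bool" where
  "strong_solution M B g gradV x mbar r X \<longleftrightarrow>
     (\<forall>\<omega>\<in>space M. continuous_on {0..} (\<lambda>t. X t \<omega>)) \<and>
     (\<forall>t\<ge>0. \<forall>A\<in>sets borel. X t -` A \<inter> space M \<in> BM_filtration M B t) \<and>
     (AE \<omega> in M. \<forall>t\<ge>0.
        X t \<omega> = x + B t \<omega> -
          integral {0..t} (\<lambda>s. g s *\<^sub>R gradV (X s \<omega> -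
             (1 / (r + s)) *\<^sub>R (r *\<^sub>R mbar + integral {0..s} (\<lambda>u. X u \<omega>)))))"

definition local_min :: "('a::real_normed_vector \<Rightarrow> real) \<Rightarrow> 'a \<Rightarrow> bool" where
  "local_min f x \<longleftrightarrow> (\<exists>e>0. \<forall>y\<in>ball x e. f x \<le> f y)"

end

theory Submission
  imports Defs
begin



definition mavg :: "real \<Rightarrow> 'a::euclidean_space \<Rightarrow> (real \<Rightarrow> 'a) \<Rightarrow> real \<Rightarrow> 'a" where
  "mavg r mb X s = (1 / (r + s)) *\<^sub>R (r *\<^sub>R mb + integral {0..s} X)"

definition Gam :: "(real \<Rightarrow> real) \<Rightarrow> ('a::euclidean_space \<Rightarrow> 'a) \<Rightarrow> 'a \<Rightarrow> 'a \<Rightarrow> real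
   \<Rightarrow> (real \<Rightarrow> 'a) \<Rightarrow> (real \<Rightarrow> 'a) \<Rightarrow> real \<Rightarrow> 'a" where
  "Gam g F x mb r b X t = x + b t - integral {0..t} (\<lambda>s. g s *\<^sub>R F (X s - mavg r mb X s))"

lemma cont_integral_upper:
  fixes X :: "real \<Rightarrow> 'a::banach"
  assumes "continuous_on {0..T} X"
  shows "continuous_on {0..T} (\<lambda>t. integral {0..t} X)"
  unfolding continuous_on_eq_continuous_within
  using integral_has_vector_derivative[OF assms] has_vector_derivative_continuous by blast

lemma cont_mavg:
  assumes "continuous_on {0..T} X" "r > 0"
  shows "continuous_on {0..T} (mavg r mb X)"
  unfolding mavg_def
  using assms
  by (intro continuous_intros cont_integral_upper) auto

lemma integral_mavg_cong:
  assumes "\<And>u. u \<in> {0..s} \<Longrightarrow> X u = Y u"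
  shows "mavg r mb X s = mavg r mb Y s"
proof -
  have "integral {0..s} X = integral {0..s} Y" using assms by (intro integral_cong) auto
  then show ?thesis unfolding mavg_def by simp
qed

lemma cont_Gam:
  assumes X: "continuous_on {0..T} X" and r: "r > 0" and g: "continuous_on {0..T} g"
    and F: "continuous_on UNIV F" and b: "continuous_on {0..T} b"
  shows "continuous_on {0..T} (Gam g F x mb r b X)"
proof -
  have "continuous_on {0..T} (\<lambda>s. g s *\<^sub>R F (X s - mavg r mb X s))"
    by (intro continuous_intros g continuous_on_compose2[OF F] X cont_mavg r) auto
  from cont_integral_upper[OF this] show ?thesis unfolding Gam_def
    by (intro continuous_on_diff continuous_on_add continuous_on_const b)
qed

lemma power_integral:
  fixes A t :: real
  assumes "0 \<le> t"
  shows "((\<lambda>s. A * s ^ k / fact k) has_integral (A * t ^ Suc k / fact (Suc k))) {0..t}"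
proof -
  have "((\<lambda>s. A * s ^ k / fact k) has_integral
      (A * t ^ Suc k / fact (Suc k) - A * 0 ^ Suc k / fact (Suc k))) {0..t}"
  proof (rule fundamental_theorem_of_calculus[where f="\<lambda>s. A * s ^ Suc k / fact (Suc k)"])
    show "0 \<le> t" by (rule assms)
    fix s :: real assume "s \<in> {0..t}"
    have "((\<lambda>s. A * s ^ Suc k / fact (Suc k)) has_real_derivative
           A * (real (Suc k) * s ^ k) / fact (Suc k)) (at s within {0..t})"
      by (intro derivative_eq_intros) auto
    moreover have "A * (real (Suc k) * s ^ k) / fact (Suc k) = A * s ^ k / fact k"
      unfolding fact_Suc by (simp add: divide_simps del: of_nat_Suc)
    ultimately show "((\<lambda>s. A * s ^ Suc k / fact (Suc k)) has_vector_derivative A * s ^ k / fact k)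
        (at s within {0..t})"
      by (simp add: has_real_derivative_iff_has_vector_derivative)
  qed
  then show ?thesis by simp
qed

lemma lip_est:
  fixes X Y :: "real \<Rightarrow> 'a::euclidean_space"
  assumes r: "r > 0" and t: "0 \<le> t"
    and g: "continuous_on {0..t} g" and gb: "\<And>s. s \<in> {0..t} \<Longrightarrow> 0 \<le> g s \<and> g s \<le> G"
    and FL: "\<And>y z. norm (F y - F z) \<le> L * norm (y - z)" and L: "0 \<le> L"
    and F: "continuous_on UNIV F"
    and X: "continuous_on {0..t} X" and Y: "continuous_on {0..t} Y"
    and C: "0 \<le> C" and K: "K = 2* G* L"
    and XY: "\<And>s. s \<in> {0..t} \<Longrightarrow> norm (X s - Y s) \<le> C * (K * s)^k / fact k"
  shows "norm (Gam g F x mb r b X t - Gam g F x mb r b Y t) \<le> C * (K * t)^(Suc k) / fact (Suc k)"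
proof -
  define hX where "hX = (\<lambda>s. g s *\<^sub>R F (X s - mavg r mb X s))"
  define hY where "hY = (\<lambda>s. g s *\<^sub>R F (Y s - mavg r mb Y s))"
  have G: "0 \<le> G" using gb[of 0] t by auto
  have K0: "0 \<le> K" using K G L by simp
  have chX: "continuous_on {0..t} hX" unfolding hX_def
    by (intro continuous_intros g continuous_on_compose2[OF F] X cont_mavg r) auto
  have chY: "continuous_on {0..t} hY" unfolding hY_def
    by (intro continuous_intros g continuous_on_compose2[OF F] Y cont_mavg r) auto
  have iX: "hX integrable_on {0..t}" by (rule integrable_continuous_real[OF chX])
  have iY: "hY integrable_on {0..t}" by (rule integrable_continuous_real[OF chY])
  have bnd: "norm (hY s - hX s) \<le> C * K^(Suc k) * s^k / fact k" if s: "s \<in> {0..t}" for s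
  proof -
    let ?B = "C * (K * s)^k / fact k"
    have B0: "0 \<le> ?B" using C K0 s by auto
    have mono: "norm (X u - Y u) \<le> ?B" if u: "u \<in> {0..s}" for u
    proof -
      have "norm (X u - Y u) \<le> C * (K * u)^k / fact k" using XY[of u] u s by auto
      also have "\<dots> \<le> ?B"
        using u K0 C by (intro divide_right_mono mult_left_mono power_mono mult_left_mono) auto
      finally show ?thesis .
    qed
    have cXY: "continuous_on {0..s} (\<lambda>u. X u - Y u)"
      using X Y s by (intro continuous_intros; auto elim: continuous_on_subset)
    have iXs: "X integrable_on {0..s}" "Y integrable_on {0..s}"
      using X Y s by (auto intro!: integrable_continuous_real elim: continuous_on_subset)
    have "norm (integral {0..s} (\<lambda>u. X u - Y u)) \<le> ?B * measure lborel {0..s}"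
      by (rule has_integral_bound_real[OF B0 finite.emptyI])
        (use integrable_integral[OF integrable_continuous_real[OF cXY]] mono in auto)
    then have i1: "norm (integral {0..s} (\<lambda>u. X u - Y u)) \<le> ?B * s" using s by simp
    have md: "mavg r mb X s - mavg r mb Y s = (1/(r+s)) *\<^sub>R integral {0..s} (\<lambda>u. X u - Y u)"
      unfolding mavg_def integral_diff[OF iXs] by (simp add: algebra_simps)
    have rs: "0 < r + s" using r s by auto
    have "norm (mavg r mb X s - mavg r mb Y s) \<le> (1/(r+s)) * (?B * s)"
    proof -
      have "norm (mavg r mb X s - mavg r mb Y s) = (1/(r+s)) * norm (integral {0..s} (\<lambda>u. X u - Y u))"
        unfolding md using rs by simp
      also have "\<dots> \<le> (1/(r+s)) * (?B * s)" using rs i1 by (intro mult_left_mono) auto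
      finally show ?thesis .
    qed
    also have "\<dots> \<le> ?B"
    proof -
      have "s / (r+s) \<le> 1" using rs r by simp
      then have "?B * (s/(r+s)) \<le> ?B * 1" using B0 by (intro mult_left_mono) auto
      then show ?thesis by (simp add: mult.commute[of "r+s"])
    qed
    finally have mb: "norm (mavg r mb X s - mavg r mb Y s) \<le> ?B" .
    have gs: "0 \<le> g s" "g s \<le> G" using gb s by auto
    have "hY s - hX s = g s *\<^sub>R (F (Y s - mavg r mb Y s) - F (X s - mavg r mb X s))"
      unfolding hX_def hY_def by (simp add: algebra_simps)
    then have "norm (hY s - hX s) = g s * norm (F (Y s - mavg r mb Y s) - F (X s - mavg r mb X s))"
      using gs by simp
    also have "\<dots> \<le> G * (L * norm ((Y s - mavg r mb Y s) - (X s - mavg r mb X s)))"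
      using gs FL G by (intro mult_mono) auto
    also have "norm ((Y s - mavg r mb Y s) - (X s - mavg r mb X s))
        \<le> norm (X s - Y s) + norm (mavg r mb X s - mavg r mb Y s)"
    proof -
      have "(Y s - mavg r mb Y s) - (X s - mavg r mb X s) = (mavg r mb X s - mavg r mb Y s) - (X s - Y s)"
        by (simp add: algebra_simps)
      then show ?thesis using norm_triangle_ineq4[of "mavg r mb X s - mavg r mb Y s" "X s - Y s"] by (simp only: add.commute)
    qed
    then have "G * (L * norm ((Y s - mavg r mb Y s) - (X s - mavg r mb X s))) \<le> G * (L * (?B + ?B))"
      using mb XY[OF s] G L by (intro mult_left_mono) auto
    also have "G * (L * (?B + ?B)) = C * K^(Suc k) * s^k / fact k"
      unfolding K by (simp add: power_mult_distrib algebra_simps)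
    finally show ?thesis .
  qed
  have "Gam g F x mb r b X t - Gam g F x mb r b Y t = integral {0..t} hY - integral {0..t} hX"
    unfolding Gam_def hX_def hY_def by simp
  also have "\<dots> = integral {0..t} (\<lambda>s. hY s - hX s)" using integral_diff[OF iY iX] by simp
  finally have eq: "Gam g F x mb r b X t - Gam g F x mb r b Y t = integral {0..t} (\<lambda>s. hY s - hX s)" .
  have PI: "((\<lambda>s. (C * K^(Suc k)) * s ^ k / fact k) has_integral ((C * K^(Suc k)) * t ^ Suc k / fact (Suc k))) {0..t}"
    by (rule power_integral[OF t])
  have "norm (integral {0..t} (\<lambda>s. hY s - hX s)) \<le> integral {0..t} (\<lambda>s. (C * K^(Suc k)) * s ^ k / fact k)"
    by (rule integral_norm_bound_integral) (use iX iY PI bnd in \<open>auto intro: integrable_diff\<close>)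
  also have "\<dots> = C * (K * t)^(Suc k) / fact (Suc k)"
    using integral_unique[OF PI] by (simp add: power_mult_distrib)
  finally show ?thesis using eq by simp
qed

lemma cont_bound:
  fixes f :: "real \<Rightarrow> 'b::real_normed_vector"
  assumes "continuous_on {a..b} f"
  shows "\<exists>C\<ge>0. \<forall>t\<in>{a..b}. norm (f t) \<le> C"
proof -
  have "bounded (f ` {a..b})" by (rule compact_imp_bounded[OF compact_continuous_image[OF assms compact_Icc]])
  then obtain C where "\<forall>y\<in>f ` {a..b}. norm y \<le> C" by (auto simp: bounded_iff)
  then show ?thesis by (intro exI[of _ "max C 0"]) auto
qed

lemma fact_ratio_lim: "(\<lambda>k. (z::real) ^ k / fact k) \<longlonglongrightarrow> 0"
proof -
  have "summable (\<lambda>k. z ^ k /\<^sub>R fact k)" by (rule summable_exp_generic)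
  from summable_LIMSEQ_zero[OF this] show ?thesis by (simp add: divide_inverse mult.commute)
qed

primrec pic :: "(real \<Rightarrow> real) \<Rightarrow> ('a::euclidean_space \<Rightarrow> 'a) \<Rightarrow> 'a \<Rightarrow> 'a \<Rightarrow> real
   \<Rightarrow> (real \<Rightarrow> 'a) \<Rightarrow> nat \<Rightarrow> real \<Rightarrow> 'a" where
  "pic g F x mb r b 0 = (\<lambda>t. x)"
| "pic g F x mb r b (Suc k) = Gam g F x mb r b (pic g F x mb r b k)"

definition sol :: "(real \<Rightarrow> real) \<Rightarrow> ('a::euclidean_space \<Rightarrow> 'a) \<Rightarrow> 'a \<Rightarrow> 'a \<Rightarrow> real
   \<Rightarrow> (real \<Rightarrow> 'a) \<Rightarrow> real \<Rightarrow> 'a" where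
  "sol g F x mb r b t = lim (\<lambda>k. pic g F x mb r b k t)"

locale picard =
  fixes g :: "real \<Rightarrow> real" and F :: "'a::euclidean_space \<Rightarrow> 'a" and x mb :: 'a
    and r L :: real and b :: "real \<Rightarrow> 'a"
  assumes r_pos: "r > 0" and g_cont: "continuous_on {0..} g"
    and g_nonneg: "\<And>t. t \<ge> 0 \<Longrightarrow> g t \<ge> 0"
    and F_lip: "\<And>y z. norm (F y - F z) \<le> L * norm (y - z)" and L_nonneg: "L \<ge> 0"
    and b_cont: "continuous_on {0..} b"
begin

abbreviation "P \<equiv> pic g F x mb r b"
abbreviation "S \<equiv> sol g F x mb r b"
abbreviation "\<Gamma> \<equiv> Gam g F x mb r b"

lemma F_cont: "continuous_on UNIV F"
proof (rule lipschitz_on_continuous_on)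
  show "L-lipschitz_on UNIV F"
    by (rule lipschitz_onI) (use F_lip L_nonneg in \<open>auto simp: dist_norm\<close>)
qed

lemma gT: "continuous_on {0..T} g" by (rule continuous_on_subset[OF g_cont]) auto
lemma bT: "continuous_on {0..T} b" by (rule continuous_on_subset[OF b_cont]) auto

lemma g_bound: "\<exists>G. \<forall>s\<in>{0..T}. 0 \<le> g s \<and> g s \<le> G"
proof -
  obtain C where "\<forall>t\<in>{0..T}. norm (g t) \<le> C" using cont_bound[OF gT] by blast
  then show ?thesis using g_nonneg by (intro exI[of _ C]) auto
qed

lemma Gam_cont: "continuous_on {0..T} X \<Longrightarrow> continuous_on {0..T} (\<Gamma> X)"
  by (rule cont_Gam[OF _ r_pos gT F_cont bT])

lemma P_cont: "continuous_on {0..T} (P k)"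
  by (induction k) (auto intro: Gam_cont)

lemma integrand_cont: "continuous_on {0..T} (\<lambda>s. g s *\<^sub>R F (P k s - mavg r mb (P k) s))"
  by (intro continuous_intros gT continuous_on_compose2[OF F_cont] P_cont cont_mavg r_pos) auto

lemma lip:
  assumes t: "0 \<le> t" and G: "\<forall>s\<in>{0..t}. 0 \<le> g s \<and> g s \<le> G"
    and X: "continuous_on {0..t} X" and Y: "continuous_on {0..t} Y"
    and C: "0 \<le> C"
    and XY: "\<And>s. s \<in> {0..t} \<Longrightarrow> norm (X s - Y s) \<le> C * (2* G* L * s)^k / fact k"
  shows "norm (\<Gamma> X t - \<Gamma> Y t) \<le> C * (2* G* L * t)^(Suc k) / fact (Suc k)"
  by (rule lip_est[OF r_pos t gT _ F_lip L_nonneg F_cont X Y C refl XY]) (use G in auto)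

lemma P_diff_bound:
  assumes T: "0 \<le> T"
  shows "\<exists>C K. 0 \<le> C \<and> 0 \<le> K \<and> (\<forall>k. \<forall>t\<in>{0..T}. norm (P (Suc k) t - P k t) \<le> C * (K * t)^k / fact k)"
proof -
  obtain G where G: "\<forall>s\<in>{0..T}. 0 \<le> g s \<and> g s \<le> G" using g_bound by blast
  have G0: "0 \<le> G" using G T by auto
  obtain C where C: "C \<ge> 0" "\<forall>t\<in>{0..T}. norm (P 1 t - P 0 t) \<le> C"
  proof -
    have "continuous_on {0..T} (\<lambda>t. P 1 t - P 0 t)"
      by (intro continuous_on_diff P_cont)
    from cont_bound[OF this] show ?thesis using that by blast
  qed
  have "\<forall>t\<in>{0..T}. norm (P (Suc k) t - P k t) \<le> C * (2* G* L * t)^k / fact k" for k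
  proof (induction k)
    case 0 then show ?case using C by simp
  next
    case (Suc k)
    show ?case
    proof
      fix t assume t: "t \<in> {0..T}"
      have "norm (\<Gamma> (P (Suc k)) t - \<Gamma> (P k) t) \<le> C * (2* G* L * t)^(Suc k) / fact (Suc k)"
        by (rule lip) (use t G Suc C P_cont in \<open>auto intro: Gam_cont P_cont\<close>)
      then show "norm (P (Suc (Suc k)) t - P (Suc k) t) \<le> C * (2* G* L * t)^(Suc k) / fact (Suc k)"
        by simp
    qed
  qed
  then show ?thesis using C G0 L_nonneg by (intro exI[of _ C] exI[of _ "2* G* L"]) auto
qed

lemma P_sum: "P k t = x + (\<Sum>i<k. P (Suc i) t - P i t)"
  by (induction k) (auto simp: algebra_simps)

lemma P_unif:
  assumes T: "0 \<le> T"
  shows "uniform_limit {0..T} P S sequentially"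
proof -
  obtain C K where CK: "0 \<le> C" "0 \<le> K" "\<And>k t. t\<in>{0..T} \<Longrightarrow> norm (P (Suc k) t - P k t) \<le> C * (K * t)^k / fact k"
    using P_diff_bound[OF T] by blast
  have M: "norm (P (Suc n) t - P n t) \<le> C * ((K * T)^n / fact n)" if "t \<in> {0..T}" for n t
  proof -
    have "norm (P (Suc n) t - P n t) \<le> C * (K * t)^n / fact n" using CK(3) that by blast
    also have "\<dots> \<le> C * (K * T)^n / fact n"
      using that CK by (intro divide_right_mono mult_left_mono power_mono mult_left_mono) auto
    finally show ?thesis by simp
  qed
  have sm: "summable (\<lambda>n. C * ((K * T)^n / fact n))"
  proof -
    have "summable (\<lambda>n. (K * T)^n /\<^sub>R fact n)" by (rule summable_exp_generic)
    then have "summable (\<lambda>n. (K * T)^n / fact n)" by (simp add: divide_inverse mult.commute)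
    then show ?thesis by (rule summable_mult)
  qed
  have W: "uniform_limit {0..T} (\<lambda>n t. \<Sum>i<n. P (Suc i) t - P i t) (\<lambda>t. suminf (\<lambda>i. P (Suc i) t - P i t)) sequentially"
    by (rule Weierstrass_m_test[OF M sm])
  have U: "uniform_limit {0..T} (\<lambda>n t. x + (\<Sum>i<n. P (Suc i) t - P i t)) (\<lambda>t. x + suminf (\<lambda>i. P (Suc i) t - P i t)) sequentially"
    by (intro uniform_limit_add uniform_limit_const W)
  have U': "uniform_limit {0..T} P (\<lambda>t. x + suminf (\<lambda>i. P (Suc i) t - P i t)) sequentially"
    using U by (subst uniform_limit_cong'[OF P_sum refl]) auto
  have "S t = x + suminf (\<lambda>i. P (Suc i) t - P i t)" if "t \<in> {0..T}" for t
    unfolding sol_def using tendsto_uniform_limitI[OF U' that] by (rule limI)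
  then show ?thesis using U' by (subst uniform_limit_cong'[OF refl]) auto
qed

lemma P_lim: "0 \<le> t \<Longrightarrow> (\<lambda>k. P k t) \<longlonglongrightarrow> S t"
  using tendsto_uniform_limitI[OF P_unif[of t]] by auto

lemma S_cont: "continuous_on {0..T} S"
proof (cases "0 \<le> T")
  case True
  show ?thesis
    by (rule uniform_limit_theorem[OF _ P_unif[OF True]]) (auto intro!: always_eventually P_cont)
qed auto

lemma small_zero:
  fixes a c :: real
  assumes "0 \<le> c" "\<And>e. e > 0 \<Longrightarrow> a \<le> e * c"
  shows "a \<le> 0"
proof (rule ccontr)
  assume "\<not> a \<le> 0"
  then have a: "a > 0" by simp
  have "a \<le> (a / (2 * (c + 1))) * c" using assms(2)[of "a / (2 * (c+1))"] a assms(1) by auto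
  also have "\<dots> < a"
  proof -
    have "0 \<le> a * c" using a assms(1) by simp
    then show ?thesis using a assms(1) by (simp add: field_simps add_nonneg_pos)
  qed
  finally show False by simp
qed

lemma S_fix:
  assumes t: "0 \<le> t"
  shows "S t = \<Gamma> S t"
proof -
  obtain G where G: "\<forall>s\<in>{0..t}. 0 \<le> g s \<and> g s \<le> G" using g_bound by blast
  have G0: "0 \<le> G" using G t by auto
  have "norm (\<Gamma> S t - S t) \<le> e * (2* G* L* t + 1)" if e: "e > 0" for e
  proof -
    from uniform_limitD[OF P_unif[OF t] e] obtain N where
      N: "\<And>n. n \<ge> N \<Longrightarrow> \<forall>s\<in>{0..t}. dist (P n s) (S s) < e"
      unfolding eventually_sequentially by blast
    have "norm (\<Gamma> S t - \<Gamma> (P N) t) \<le> e * (2* G* L * t)^(Suc 0) / fact (Suc 0)"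
    proof (rule lip[OF t G S_cont P_cont])
      show "0 \<le> e" using e by simp
      fix s assume "s \<in> {0..t}"
      then show "norm (S s - P N s) \<le> e * (2* G* L * s)^0 / fact 0"
        using N[of N] by (auto simp: dist_norm norm_minus_commute intro: less_imp_le)
    qed
    then have 1: "norm (\<Gamma> S t - P (Suc N) t) \<le> e * (2* G* L* t)" by simp
    have "dist (P (Suc N) t) (S t) < e" using N[of "Suc N"] t by auto
    then have 2: "norm (P (Suc N) t - S t) \<le> e" by (simp add: dist_norm)
    have "norm (\<Gamma> S t - S t) \<le> norm (\<Gamma> S t - P (Suc N) t) + norm (P (Suc N) t - S t)"
      using norm_triangle_ineq[of "\<Gamma> S t - P (Suc N) t" "P (Suc N) t - S t"] by simp
    also have "\<dots> \<le> e * (2* G* L* t) + e" using 1 2 by simp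
    finally show ?thesis by (simp add: algebra_simps)
  qed
  then have "norm (\<Gamma> S t - S t) \<le> 0"
    by (intro small_zero[where c = "2* G* L* t + 1"]) (use G0 L_nonneg t in auto)
  then show ?thesis by simp
qed

lemma uniq:
  assumes X: "continuous_on {0..T} X" and Y: "continuous_on {0..T} Y"
    and FX: "\<And>t. t \<in> {0..T} \<Longrightarrow> X t = \<Gamma> X t"
    and FY: "\<And>t. t \<in> {0..T} \<Longrightarrow> Y t = \<Gamma> Y t"
    and t: "t \<in> {0..T}"
  shows "X t = Y t"
proof -
  obtain G where G: "\<forall>s\<in>{0..T}. 0 \<le> g s \<and> g s \<le> G" using g_bound by blast
  obtain C where C: "C \<ge> 0" "\<forall>s\<in>{0..T}. norm (X s - Y s) \<le> C"
    using cont_bound[OF continuous_on_diff[OF X Y]] by blast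
  have ind: "\<forall>s\<in>{0..T}. norm (X s - Y s) \<le> C * (2* G* L* s)^k / fact k" for k
  proof (induction k)
    case 0 then show ?case using C by simp
  next
    case (Suc k)
    show ?case
    proof
      fix s assume s: "s \<in> {0..T}"
      have "norm (\<Gamma> X s - \<Gamma> Y s) \<le> C * (2* G* L * s)^(Suc k) / fact (Suc k)"
        by (rule lip) (use s G Suc C X Y in \<open>auto intro: continuous_on_subset\<close>)
      then show "norm (X s - Y s) \<le> C * (2* G* L * s)^(Suc k) / fact (Suc k)"
        using FX[OF s] FY[OF s] by simp
    qed
  qed
  have "(\<lambda>k. C * ((2* G* L* t)^k / fact k)) \<longlonglongrightarrow> C * 0"
    by (intro tendsto_mult tendsto_const fact_ratio_lim)
  then have "(\<lambda>k. C * ((2*G*L*t)^k / fact k)) \<longlonglongrightarrow> 0" by simp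
  then have "norm (X t - Y t) \<le> 0"
    by (rule tendsto_le[OF sequentially_bot _ tendsto_const]) (use ind t in \<open>auto intro!: always_eventually\<close>)
  then show ?thesis by simp
qed

end




locale pot =
  fixes V W chi :: "'a::euclidean_space \<Rightarrow> real"
    and DV DW Dchi :: "'a \<Rightarrow> 'a"
    and HV HW :: "'a \<Rightarrow> 'a \<Rightarrow>\<^sub>L 'a" and c :: real
  assumes V_grad: "\<And>y. (V has_derivative (\<lambda>h. DV y \<bullet> h)) (at y)"
    and V_hess: "\<And>y. (DV has_derivative blinfun_apply (HV y)) (at y)"
    and V_C2: "continuous_on UNIV HV"
    and V_split: "\<And>y. V y = W y + chi y"
    and chi_supp: "compact (closure {y. chi y \<noteq> 0})"
    and chi_grad: "\<And>y. (chi has_derivative (\<lambda>h. Dchi y \<bullet> h)) (at y)"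
    and chi_lip: "\<exists>L. \<forall>y z. norm (Dchi y - Dchi z) \<le> L * dist y z"
    and W_grad: "\<And>y. (W has_derivative (\<lambda>h. DW y \<bullet> h)) (at y)"
    and W_hess: "\<And>y. (DW has_derivative blinfun_apply (HW y)) (at y)"
    and c_pos: "c > 0"
    and W_convex: "\<And>y h. blinfun_apply (HW y) h \<bullet> h \<ge> c * (norm h)\<^sup>2"
begin

lemma inner_deriv_eq:
  fixes u v :: "'a"
  assumes "(\<lambda>h. u \<bullet> h) = (\<lambda>h. v \<bullet> h)"
  shows "u = v"
proof -
  have "(u - v) \<bullet> (u - v) = 0" using fun_cong[OF assms, of "u - v"] by (simp add: inner_diff_left)
  then show ?thesis by simp
qed

lemma DV_split: "DV y = DW y + Dchi y"
proof -
  have "V = (\<lambda>y. W y + chi y)" using V_split by auto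
  then have "(V has_derivative (\<lambda>h. DW y \<bullet> h + Dchi y \<bullet> h)) (at y)"
    using has_derivative_add[OF W_grad chi_grad] by simp
  from has_derivative_unique[OF V_grad this] have "(\<lambda>h. DV y \<bullet> h) = (\<lambda>h. (DW y + Dchi y) \<bullet> h)"
    by (simp add: inner_add_left)
  then show ?thesis by (rule inner_deriv_eq)
qed

lemma DV_cont: "continuous_on UNIV DV"
  using V_hess has_derivative_continuous continuous_on_eq_continuous_within by blast

lemma DW_cont: "continuous_on UNIV DW"
  using W_hess has_derivative_continuous continuous_on_eq_continuous_within by blast

lemma W_mono: "(DW u - DW v) \<bullet> (u - v) \<ge> c * (norm (u - v))\<^sup>2"
proof -
  define d where "d = u - v"
  define \<phi> where "\<phi> = (\<lambda>\<tau>::real. DW (v + \<tau> *\<^sub>R d) \<bullet> d)"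
  have der: "(\<phi> has_derivative (\<lambda>h. blinfun_apply (HW (v + \<tau> *\<^sub>R d)) (h *\<^sub>R d) \<bullet> d)) (at \<tau> within {0..1})" for \<tau>
  proof -
    have p: "((\<lambda>\<tau>::real. v + \<tau> *\<^sub>R d) has_derivative (\<lambda>h. h *\<^sub>R d)) (at \<tau> within {0..1})"
      by (auto intro!: derivative_eq_intros)
    have "((\<lambda>\<tau>. DW (v + \<tau> *\<^sub>R d)) has_derivative (\<lambda>h. blinfun_apply (HW (v + \<tau> *\<^sub>R d)) (h *\<^sub>R d))) (at \<tau> within {0..1})"
      by (rule has_derivative_compose[OF p W_hess])
    then show ?thesis unfolding \<phi>_def by (rule has_derivative_inner_left)
  qed
  obtain \<xi> where "\<phi> 1 - \<phi> 0 = blinfun_apply (HW (v + \<xi> *\<^sub>R d)) ((1 - 0) *\<^sub>R d) \<bullet> d"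
    using mvt_simple[of 0 1 \<phi>, OF _ der] by auto
  then have "\<phi> 1 - \<phi> 0 \<ge> c * (norm d)\<^sup>2" using W_convex[where y="v + \<xi> *\<^sub>R d" and h=d] by simp
  moreover have "\<phi> 1 - \<phi> 0 = (DW u - DW v) \<bullet> (u - v)"
    unfolding \<phi>_def d_def by (simp add: inner_diff_left)
  ultimately show ?thesis unfolding d_def by simp
qed

lemma Dchi_bound: "\<exists>C\<ge>0. \<forall>y. norm (Dchi y) \<le> C"
proof -
  define S where "S = closure {y. chi y \<noteq> 0}"
  obtain L where L: "\<And>y z. norm (Dchi y - Dchi z) \<le> L * dist y z" using chi_lip by blast
  obtain M where M: "\<And>y. y \<in> S \<Longrightarrow> norm y \<le> M"
  proof -
    from compact_imp_bounded[OF chi_supp] obtain M where "\<forall>y\<in>closure {y. chi y \<noteq> 0}. norm y \<le> M"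
      unfolding bounded_iff by auto
    then show ?thesis using that unfolding S_def by auto
  qed
  have out: "Dchi y = 0" if y: "y \<notin> S" for y
  proof -
    have o: "open (- S)" unfolding S_def by auto
    have z: "chi z = 0" if "z \<in> - S" for z
      using closure_subset[of "{y. chi y \<noteq> 0}"] that unfolding S_def by auto
    have "((\<lambda>_. 0::real) has_derivative (\<lambda>h. Dchi y \<bullet> h)) (at y)"
      by (rule has_derivative_transform_within_open[OF chi_grad o _ z]) (use y in auto)
    from has_derivative_unique[OF this has_derivative_const]
    have "(\<lambda>h. Dchi y \<bullet> h) = (\<lambda>h. 0 \<bullet> h)" by simp
    then show ?thesis by (rule inner_deriv_eq)
  qed
  have "norm (Dchi y) \<le> norm (Dchi 0) + \<bar>L\<bar> * \<bar>M\<bar>" for y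
  proof (cases "y \<in> S")
    case True
    have "norm (Dchi y) \<le> norm (Dchi 0) + norm (Dchi y - Dchi 0)" by (rule norm_triangle_sub)
    also have "norm (Dchi y - Dchi 0) \<le> L * dist y 0" by (rule L)
    also have "L * dist y 0 \<le> \<bar>L\<bar> * \<bar>M\<bar>"
    proof -
      have "L * dist y 0 \<le> \<bar>L\<bar> * norm y"
        unfolding dist_norm using mult_right_mono[OF abs_ge_self norm_ge_zero, of L y] by simp
      also have "\<dots> \<le> \<bar>L\<bar> * \<bar>M\<bar>" using M[OF True] by (intro mult_left_mono) auto
      finally show ?thesis .
    qed
    finally show ?thesis by simp
  next
    case False
    then show ?thesis using out by simp
  qed
  then show ?thesis by (intro exI[of _ "norm (Dchi 0) + \<bar>L\<bar> * \<bar>M\<bar>"]) auto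
qed

lemma DV_lip_ball:
  assumes "0 \<le> R"
  shows "\<exists>L\<ge>0. \<forall>y\<in>cball 0 R. \<forall>z\<in>cball 0 R. norm (DV y - DV z) \<le> L * norm (y - z)"
proof -
  have "bounded (HV ` cball 0 R)"
    by (rule compact_imp_bounded[OF compact_continuous_image[OF continuous_on_subset[OF V_C2] compact_cball]]) auto
  then obtain B where B: "\<And>y. y \<in> cball 0 R \<Longrightarrow> norm (HV y) \<le> B" unfolding bounded_iff by blast
  have "norm (DV y - DV z) \<le> max B 0 * norm (y - z)" if "y \<in> cball 0 R" "z \<in> cball 0 R" for y z
  proof (rule differentiable_bound[OF convex_cball _ _ that])
    show "(DV has_derivative blinfun_apply (HV u)) (at u within cball 0 R)" for u
      using V_hess has_derivative_at_withinI by blast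
    show "onorm (blinfun_apply (HV u)) \<le> max B 0" if "u \<in> cball 0 R" for u
      using B[OF that] by (simp add: norm_blinfun.rep_eq[symmetric])
  qed
  then show ?thesis by (intro exI[of _ "max B 0"]) auto
qed

definition Ftr :: "real \<Rightarrow> 'a \<Rightarrow> 'a" where
  "Ftr R z = DV (closest_point (cball 0 R) z)"

lemma Ftr_eq: "norm z \<le> R \<Longrightarrow> Ftr R z = DV z"
  unfolding Ftr_def by (subst closest_point_self) auto

lemma Ftr_lip:
  assumes "0 \<le> R"
  shows "\<exists>L\<ge>0. \<forall>y z. norm (Ftr R y - Ftr R z) \<le> L * norm (y - z)"
proof -
  obtain L where L: "L \<ge> 0" "\<forall>y\<in>cball 0 R. \<forall>z\<in>cball 0 R. norm (DV y - DV z) \<le> L * norm (y - z)"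
    using DV_lip_ball[OF assms] by blast
  have ne: "cball (0::'a) R \<noteq> {}" using assms by auto
  have "norm (Ftr R y - Ftr R z) \<le> L * norm (y - z)" for y z
  proof -
    let ?p = "closest_point (cball 0 R)"
    have "norm (Ftr R y - Ftr R z) \<le> L * norm (?p y - ?p z)"
      unfolding Ftr_def using L closest_point_in_set[OF _ ne] by auto
    also have "\<dots> \<le> L * norm (y - z)"
      using closest_point_lipschitz[OF convex_cball closed_cball ne, of y z] L
      by (intro mult_left_mono) (auto simp: dist_norm)
    finally show ?thesis .
  qed
  then show ?thesis using L by blast
qed

lemma key_ineq:
  assumes r: "r > 0" and t: "0 \<le> t" and gm: "0 < gm" "gm \<le> gt" "gt \<le> G"
    and Db: "norm (DW bb) \<le> Db" and Bs: "norm bb \<le> Bs" and Cx: "\<forall>y. norm (Dchi y) \<le> Cx"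
    and K: "(G * (Db + Cx) + Bs / r) / (gm * c) \<le> K" and yK: "K < norm y"
  shows "y \<bullet> (- (gt *\<^sub>R DV (y + bb)) - (1 / (r + t)) *\<^sub>R (y + bb)) < 0"
proof -
  let ?n = "norm y"
  have n0: "0 < ?n" using yK K gm c_pos r Db Bs Cx
  proof -
    have "0 \<le> Db" "0 \<le> Bs" "0 \<le> Cx" using Db Bs Cx[rule_format, of 0] norm_ge_zero[of "DW bb"] norm_ge_zero[of "Dchi 0"] norm_ge_zero[of bb] by linarith+
    then have "0 \<le> (G * (Db + Cx) + Bs / r) / (gm * c)" using gm c_pos r by auto
    then show ?thesis using K yK by linarith
  qed
  have a1: "y \<bullet> DW (y + bb) \<ge> c * ?n^2 - Db * ?n"
  proof -
    have "(DW (y + bb) - DW bb) \<bullet> ((y + bb) - bb) \<ge> c * (norm ((y + bb) - bb))\<^sup>2" by (rule W_mono)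
    then have "y \<bullet> DW (y + bb) \<ge> c * ?n^2 + y \<bullet> DW bb" by (simp add: inner_diff_left inner_diff_right inner_commute)
    moreover have "y \<bullet> DW bb \<ge> - (Db * ?n)"
    proof -
      have "\<bar>y \<bullet> DW bb\<bar> \<le> ?n * norm (DW bb)" by (rule Cauchy_Schwarz_ineq2)
      also have "\<dots> \<le> ?n * Db" using Db by (intro mult_left_mono) auto
      finally show ?thesis by (simp add: mult.commute)
    qed
    ultimately show ?thesis by linarith
  qed
  have a2: "y \<bullet> Dchi (y + bb) \<ge> - (Cx * ?n)"
  proof -
    have "\<bar>y \<bullet> Dchi (y + bb)\<bar> \<le> ?n * norm (Dchi (y + bb))" by (rule Cauchy_Schwarz_ineq2)
    also have "\<dots> \<le> ?n * Cx" using Cx by (intro mult_left_mono) auto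
    finally show ?thesis by (simp add: mult.commute)
  qed
  have a3: "y \<bullet> DV (y + bb) \<ge> c * ?n^2 - (Db + Cx) * ?n"
    using a1 a2 unfolding DV_split inner_add_right by (simp add: algebra_simps)
  have a4: "y \<bullet> ((1 / (r + t)) *\<^sub>R (y + bb)) \<ge> - (Bs / r * ?n)"
  proof -
    have "\<bar>y \<bullet> bb\<bar> \<le> ?n * norm bb" by (rule Cauchy_Schwarz_ineq2)
    also have "\<dots> \<le> ?n * Bs" using Bs by (intro mult_left_mono) auto
    finally have "\<bar>y \<bullet> bb\<bar> \<le> ?n * Bs" .
    then have "y \<bullet> (y + bb) \<ge> - (?n * Bs)" using inner_ge_zero[of y] unfolding inner_add_right by linarith
    then have "y \<bullet> (y + bb) \<ge> - (?n * Bs)" .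
    have rt: "0 < r + t" using r t by simp
    have "y \<bullet> ((1 / (r + t)) *\<^sub>R (y + bb)) = (y \<bullet> (y + bb)) / (r + t)" by simp
    also have "\<dots> \<ge> - (?n * Bs) / (r + t)"
      using rt \<open>y \<bullet> (y + bb) \<ge> - (?n * Bs)\<close> by (intro divide_right_mono) auto
    also have "- (?n * Bs) / (r + t) \<ge> - (?n * Bs) / r"
    proof -
      have "0 \<le> Bs" using Bs norm_ge_zero[of bb] by linarith
      then have "0 \<le> ?n * Bs" by simp
      then have "?n * Bs / (r + t) \<le> ?n * Bs / r" using r t by (intro divide_left_mono) auto
      then show ?thesis by simp
    qed
    finally show ?thesis by (simp add: mult.commute)
  qed
  have gt0: "0 < gt" using gm by simp
  have "y \<bullet> (- (gt *\<^sub>R DV (y + bb)) - (1 / (r + t)) *\<^sub>R (y + bb))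
      = - (gt * (y \<bullet> DV (y + bb))) - y \<bullet> ((1 / (r + t)) *\<^sub>R (y + bb))"
    by (simp add: inner_diff_right)
  also have "\<dots> \<le> - (gt * (c * ?n^2 - (Db + Cx) * ?n)) + Bs / r * ?n"
    using a3 a4 gt0 mult_left_mono[OF a3, of gt] by linarith
  also have "\<dots> = ?n * (- gt * c * ?n + gt * (Db + Cx) + Bs / r)" by (simp add: algebra_simps power2_eq_square)
  also have "\<dots> < 0"
  proof -
    have DC: "0 \<le> Db + Cx" using Db Cx[rule_format, of 0] norm_ge_zero[of "DW bb"] norm_ge_zero[of "Dchi 0"] by linarith
    have B0: "0 \<le> Bs" using Bs norm_ge_zero[of bb] by linarith
    have "gm * c * K \<ge> G * (Db + Cx) + Bs / r" using K gm c_pos by (simp add: pos_divide_le_eq mult.commute)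
    moreover have "gm * c * K < gm * c * ?n" using yK gm c_pos by simp
    moreover have "gm * c * ?n \<le> gt * c * ?n" using gm c_pos n0 by (intro mult_right_mono) auto
    moreover have "gt * (Db + Cx) \<le> G * (Db + Cx)" using gm DC by (intro mult_right_mono) auto
    ultimately have "- gt * c * ?n + gt * (Db + Cx) + Bs / r < 0" by linarith
    then show ?thesis using n0 by (simp add: mult_pos_neg)
  qed
  finally show ?thesis .
qed

lemma Ftr_cont: "0 \<le> R \<Longrightarrow> continuous_on UNIV (Ftr R)"
proof -
  assume R: "0 \<le> R"
  obtain L where L: "L \<ge> 0" "\<forall>y z. norm (Ftr R y - Ftr R z) \<le> L * norm (y - z)"
    using Ftr_lip[OF R] by blast
  show ?thesis
  proof (rule lipschitz_on_continuous_on)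
    show "L-lipschitz_on UNIV (Ftr R)"
      by (rule lipschitz_onI) (use L in \<open>auto simp: dist_norm\<close>)
  qed
qed

lemma apriori:
  fixes g :: "real \<Rightarrow> real" and x mb :: 'a and r gm T :: real and b :: "real \<Rightarrow> 'a"
  assumes r: "r > 0" and gc: "continuous_on {0..} g" and gm: "0 < gm" "\<And>t. t \<ge> 0 \<Longrightarrow> gm \<le> g t"
    and bc: "continuous_on {0..} b" and T: "0 \<le> T"
  shows "\<exists>Kb>0. \<forall>R X. Kb \<le> R \<longrightarrow> continuous_on {0..T} X \<longrightarrow>
     (\<forall>t\<in>{0..T}. X t = Gam g (Ftr R) x mb r b X t) \<longrightarrow>
     (\<forall>t\<in>{0..T}. norm (X t - mavg r mb X t) < Kb)"
proof -
  have gT: "continuous_on {0..T} g" by (rule continuous_on_subset[OF gc]) auto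
  have bT: "continuous_on {0..T} b" by (rule continuous_on_subset[OF bc]) auto
  obtain G where G: "G \<ge> 0" "\<forall>s\<in>{0..T}. norm (g s) \<le> G" using cont_bound[OF gT] by blast
  obtain Bs where Bs: "Bs \<ge> 0" "\<forall>s\<in>{0..T}. norm (b s) \<le> Bs" using cont_bound[OF bT] by blast
  obtain Db where Db: "Db \<ge> 0" "\<forall>s\<in>{0..T}. norm (DW (b s)) \<le> Db"
    using cont_bound[OF continuous_on_compose2[OF DW_cont bT]] by auto
  obtain Cx where Cx: "Cx \<ge> 0" "\<forall>y. norm (Dchi y) \<le> Cx" using Dchi_bound by blast
  define K where "K = max (norm (x - mb)) ((G * (Db + Cx) + Bs / r) / (gm * c))"
  define Kb where "Kb = K + Bs + 1"
  have K0: "0 \<le> K" unfolding K_def by (rule order_trans[OF norm_ge_zero max.cobounded1])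
  have Kq: "(G * (Db + Cx) + Bs / r) / (gm * c) \<le> K" unfolding K_def by simp
  show ?thesis
  proof (intro exI[of _ Kb] conjI allI impI)
    show "0 < Kb" unfolding Kb_def using K0 Bs by simp
    fix R X assume R: "Kb \<le> R" and Xc: "continuous_on {0..T} X"
      and Xeq: "\<forall>t\<in>{0..T}. X t = Gam g (Ftr R) x mb r b X t"
    define Z where "Z t = X t - mavg r mb X t" for t
    define h where "h s = g s *\<^sub>R Ftr R (Z s)" for s
    define Yf where "Yf t = x - integral {0..t} h - mavg r mb X t" for t
    define Yd where "Yd t = - h t - (1 / (r + t)) *\<^sub>R Z t" for t
    have R0: "0 \<le> R" using R K0 Bs unfolding Kb_def by linarith
    have Zc: "continuous_on {0..T} Z" unfolding Z_def
      by (intro continuous_on_diff Xc cont_mavg r)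
    have hc: "continuous_on {0..T} h" unfolding h_def
      by (intro continuous_on_scaleR gT continuous_on_compose2[OF Ftr_cont[OF R0] Zc]) auto
    have YZ: "Z t = Yf t + b t" if t: "t \<in> {0..T}" for t
    proof -
      have "h = (\<lambda>s. g s *\<^sub>R Ftr R (X s - mavg r mb X s))" unfolding h_def Z_def by (rule ext) simp
      then have "X t = x + b t - integral {0..t} h" using Xeq t unfolding Gam_def by auto
      then show ?thesis unfolding Z_def Yf_def by (simp add: algebra_simps)
    qed
    have Y0: "Yf 0 = x - mb" unfolding Yf_def mavg_def using r by simp
    have Yder: "(Yf has_vector_derivative Yd t) (at t within {0..T})" if t: "t \<in> {0..T}" for t
    proof -
      have rt: "r + t \<noteq> 0" using r t by simp
      have D1: "((\<lambda>t. integral {0..t} h) has_vector_derivative h t) (at t within {0..T})"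
        by (rule integral_has_vector_derivative[OF hc t])
      have D2: "((\<lambda>t. integral {0..t} X) has_vector_derivative X t) (at t within {0..T})"
        by (rule integral_has_vector_derivative[OF Xc t])
      have D3: "((\<lambda>t. 1 / (r + t)) has_real_derivative (- 1 / (r + t)^2)) (at t within {0..T})"
        using rt by (auto intro!: derivative_eq_intros simp: power2_eq_square field_simps)
      have D4: "((\<lambda>t. r *\<^sub>R mb + integral {0..t} X) has_vector_derivative (0 + X t)) (at t within {0..T})"
        by (rule has_vector_derivative_add[OF has_vector_derivative_const D2])
      have D5: "((\<lambda>t. (1 / (r + t)) *\<^sub>R (r *\<^sub>R mb + integral {0..t} X)) has_vector_derivative
          ((1 / (r + t)) *\<^sub>R (0 + X t) + (- 1 / (r + t)^2) *\<^sub>R (r *\<^sub>R mb + integral {0..t} X))) (at t within {0..T})"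
        by (rule has_vector_derivative_scaleR[OF D3 D4])
      have mv: "mavg r mb X = (\<lambda>t. (1 / (r + t)) *\<^sub>R (r *\<^sub>R mb + integral {0..t} X))"
        by (rule ext) (simp add: mavg_def)
      have D6: "(Yf has_vector_derivative (0 - h t - ((1 / (r + t)) *\<^sub>R (0 + X t) + (- 1 / (r + t)^2) *\<^sub>R (r *\<^sub>R mb + integral {0..t} X))))
          (at t within {0..T})"
        unfolding Yf_def[abs_def] mv
        by (intro has_vector_derivative_diff has_vector_derivative_const D1 D5)
      have "(1 / (r + t)) *\<^sub>R (0 + X t) + (- 1 / (r + t)^2) *\<^sub>R (r *\<^sub>R mb + integral {0..t} X) = (1 / (r + t)) *\<^sub>R Z t"
        unfolding Z_def mavg_def using rt by (simp add: power2_eq_square scaleR_diff_right)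
      then show ?thesis using D6 unfolding Yd_def by simp
    qed
    have Yc: "continuous_on {0..T} Yf"
      unfolding continuous_on_eq_continuous_within
      using Yder has_vector_derivative_continuous by blast
    have key: "Yf t \<bullet> Yd t < 0" if t: "t \<in> {0..T}" and K1: "K < norm (Yf t)" and K2: "norm (Yf t) < K + 1" for t
    proof -
      have "norm (Z t) \<le> norm (Yf t) + norm (b t)" unfolding YZ[OF t] by (rule norm_triangle_ineq)
      also have "\<dots> < K + 1 + Bs" using K2 Bs t by force
      finally have "norm (Z t) \<le> R" using R unfolding Kb_def by simp
      then have hh: "h t = g t *\<^sub>R DV (Yf t + b t)" unfolding h_def using Ftr_eq YZ[OF t] by simp
      have gt: "gm \<le> g t" "g t \<le> G" using gm(2)[of t] G(2) t abs_ge_self[of "g t"] by (auto dest: bspec[of _ _ t])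
      show ?thesis unfolding Yd_def hh YZ[OF t]
        by (rule key_ineq[OF r _ gm(1) gt _ _ Cx(2) Kq K1]) (use t Db Bs in auto)
    qed
    have bound: "\<forall>t\<in>{0..T}. norm (Yf t) \<le> K"
    proof (rule ccontr)
      assume "\<not> ?thesis"
      then obtain t0 where t0: "t0 \<in> {0..T}" "K < norm (Yf t0)" by force
      define A where "A = {0..t0} \<inter> (\<lambda>s. norm (Yf s)) -` {..K}"
      have Yc0: "continuous_on {0..t0} (\<lambda>s. norm (Yf s))"
        by (intro continuous_on_norm continuous_on_subset[OF Yc]) (use t0 in auto)
      have Acl: "closed A" unfolding A_def
        by (rule continuous_closed_preimage[OF Yc0 closed_atLeastAtMost closed_atMost])
      have A0: "0 \<in> A" unfolding A_def using Y0 t0 K_def by auto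
      have Abdd: "bdd_above A" unfolding A_def by (rule bdd_aboveI[of _ t0]) auto
      define s where "s = Sup A"
      have sA: "s \<in> A" unfolding s_def by (rule closed_contains_Sup[OF _ Abdd Acl]) (use A0 in auto)
      have s1: "0 \<le> s" "s \<le> t0" "norm (Yf s) \<le> K" using sA unfolding A_def by auto
      have s2: "s < t0" using s1 t0 by (metis order_le_less not_less)
      have after: "K < norm (Yf u)" if "s < u" "u \<le> t0" for u
      proof (rule ccontr)
        assume "\<not> K < norm (Yf u)"
        then have "u \<in> A" unfolding A_def using that s1 by auto
        then have "u \<le> s" unfolding s_def by (rule cSup_upper[OF _ Abdd])
        then show False using that by simp
      qed
      have sT: "s \<in> {0..T}" using s1 t0 by auto
      obtain \<delta> where \<delta>: "\<delta> > 0" "\<And>u. u \<in> {0..T} \<Longrightarrow> dist u s < \<delta> \<Longrightarrow> dist (Yf u) (Yf s) < 1"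
        using Yc sT unfolding continuous_on_iff by (metis zero_less_one)
      define u1 where "u1 = min (s + \<delta> / 2) t0"
      have u1: "s < u1" "u1 \<le> t0" using s2 \<delta>(1) unfolding u1_def by auto
      define \<rho> where "\<rho> = (\<lambda>\<tau>. Yf \<tau> \<bullet> Yf \<tau>)"
      have \<rho>d: "(\<rho> has_derivative (\<lambda>h. Yf \<tau> \<bullet> (h *\<^sub>R Yd \<tau>) + (h *\<^sub>R Yd \<tau>) \<bullet> Yf \<tau>)) (at \<tau> within {s..u1})"
        if "s \<le> \<tau>" "\<tau> \<le> u1" for \<tau>
      proof -
        have \<tau>T: "\<tau> \<in> {0..T}" using that s1 u1 t0 by auto
        have "(Yf has_derivative (\<lambda>h. h *\<^sub>R Yd \<tau>)) (at \<tau> within {s..u1})"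
        proof -
          have sub: "{s..u1} \<subseteq> {0..T}" using s1 u1 t0 by auto
          show ?thesis using has_vector_derivative_within_subset[OF Yder[OF \<tau>T] sub]
            by (simp only: has_vector_derivative_def)
        qed
        from has_derivative_inner[OF this this] show ?thesis unfolding \<rho>_def by simp
      qed
      obtain \<xi> where \<xi>: "\<xi> \<in> {s<..<u1}"
        and mv: "\<rho> u1 - \<rho> s = Yf \<xi> \<bullet> ((u1 - s) *\<^sub>R Yd \<xi>) + ((u1 - s) *\<^sub>R Yd \<xi>) \<bullet> Yf \<xi>"
        using mvt_simple[OF u1(1) \<rho>d] by blast
      have \<xi>T: "\<xi> \<in> {0..T}" using \<xi> s1 u1 t0 by auto
      have "dist \<xi> s < \<delta>" using \<xi> u1 unfolding u1_def dist_real_def by auto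
      then have "dist (Yf \<xi>) (Yf s) < 1" using \<delta>(2)[OF \<xi>T] by simp
      then have k2: "norm (Yf \<xi>) < K + 1" using s1 norm_triangle_ineq2[of "Yf \<xi>" "Yf s"]
        unfolding dist_norm by linarith
      have k1: "K < norm (Yf \<xi>)" using after \<xi> u1 by auto
      have neg: "Yf \<xi> \<bullet> Yd \<xi> < 0" by (rule key[OF \<xi>T k1 k2])
      have "\<rho> u1 - \<rho> s = 2 * (u1 - s) * (Yf \<xi> \<bullet> Yd \<xi>)" unfolding mv by (simp add: inner_commute)
      also have "\<dots> < 0" using neg u1 by (simp add: mult_pos_neg)
      finally have lt: "\<rho> u1 < \<rho> s" by simp
      have "\<rho> s = (norm (Yf s))^2" unfolding \<rho>_def by (simp add: power2_norm_eq_inner)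
      also have "\<dots> \<le> K^2" using s1 by (intro power_mono) auto
      finally have a: "\<rho> s \<le> K^2" .
      have "K^2 < (norm (Yf u1))^2" using after[OF u1] K0 by (intro power_strict_mono) auto
      also have "\<dots> = \<rho> u1" unfolding \<rho>_def by (simp add: power2_norm_eq_inner)
      finally show False using lt a by simp
    qed
    show "\<forall>t\<in>{0..T}. norm (X t - mavg r mb X t) < Kb"
    proof
      fix t assume t: "t \<in> {0..T}"
      have "norm (Z t) \<le> norm (Yf t) + norm (b t)" unfolding YZ[OF t] by (rule norm_triangle_ineq)
      also have "\<dots> \<le> K + Bs" using bound Bs t by (intro add_mono) auto
      finally show "norm (X t - mavg r mb X t) < Kb" unfolding Z_def Kb_def by simp
    qed
  qed
qed

end




lemma integral_measurable:
  fixes f :: "real \<Rightarrow> 'w \<Rightarrow> 'a::euclidean_space"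
  assumes meas: "\<And>s. s \<in> {0..t} \<Longrightarrow> f s \<in> borel_measurable N"
    and cont: "\<And>\<omega>. \<omega> \<in> space N \<Longrightarrow> continuous_on {0..t} (\<lambda>s. f s \<omega>)"
  shows "(\<lambda>\<omega>. integral {0..t} (\<lambda>s. f s \<omega>)) \<in> borel_measurable N"
proof (cases "0 \<le> t")
  case False
  then show ?thesis by simp
next
  case t: True
  define cl where "cl s = max 0 (min t s)" for s :: real
  have cl01: "cl s \<in> {0..t}" for s unfolding cl_def using t by auto
  have cl0: "0 \<le> cl s" "cl s \<le> t" for s using cl01[of s] by auto
  have clc: "continuous_on UNIV cl" unfolding cl_def by (intro continuous_intros)
  have cl_id: "s \<in> {0..t} \<Longrightarrow> cl s = s" for s unfolding cl_def by auto
  define q where "q n s = real_of_int \<lceil>real (Suc n) * s\<rceil> / real (Suc n)" for n :: nat and s :: real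
  define fa where "fa n = (\<lambda>p::'w \<times> real. f (cl (q n (snd p))) (fst p))" for n
  have fa_meas: "fa n \<in> borel_measurable (N \<Otimes>\<^sub>M lborel)" for n
  proof -
    have "(\<lambda>p. f (cl (real_of_int i / real (Suc n))) (fst p)) \<in> borel_measurable (N \<Otimes>\<^sub>M lborel)" for i :: int
      by (rule measurable_compose[OF measurable_fst meas[OF cl01]])
    moreover have "(\<lambda>p::'w \<times> real. \<lceil>real (Suc n) * snd p\<rceil>) \<in> measurable (N \<Otimes>\<^sub>M lborel) (count_space UNIV)"
      by measurable
    ultimately show ?thesis unfolding fa_def q_def
      by (rule measurable_compose_countable[where f="\<lambda>i p. f (cl (real_of_int i / real (Suc n))) (fst p)"])
  qed
  have q_lim: "(\<lambda>n. q n s) \<longlonglongrightarrow> s" for s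
  proof (rule tendsto_sandwich[of "\<lambda>n. s" _ _ "\<lambda>n. s + 1 / real (Suc n)"])
    show "\<forall>\<^sub>F n in sequentially. s \<le> q n s"
      unfolding q_def by (intro always_eventually allI) (simp add: pos_le_divide_eq mult.commute)
    show "\<forall>\<^sub>F n in sequentially. q n s \<le> s + 1 / real (Suc n)"
    proof (intro always_eventually allI)
      fix n
      have "real_of_int \<lceil>real (Suc n) * s\<rceil> \<le> real (Suc n) * s + 1"
        by linarith
      then show "q n s \<le> s + 1 / real (Suc n)"
        unfolding q_def by (simp add: pos_divide_le_eq field_simps del: of_nat_Suc)
    qed
    have "(\<lambda>n. s + 1 / real (Suc n)) \<longlonglongrightarrow> s + 0"
      by (intro tendsto_add tendsto_const LIMSEQ_Suc[OF lim_1_over_n])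
    then show "(\<lambda>n. s + 1 / real (Suc n)) \<longlonglongrightarrow> s" by simp
  qed simp
  define fl where "fl = (\<lambda>p::'w \<times> real. f (cl (snd p)) (fst p))"
  have fl_meas: "fl \<in> borel_measurable (N \<Otimes>\<^sub>M lborel)"
  proof (rule borel_measurable_LIMSEQ_metric[OF fa_meas])
    fix p :: "'w \<times> real" assume p: "p \<in> space (N \<Otimes>\<^sub>M lborel)"
    then have w: "fst p \<in> space N" by (auto simp: space_pair_measure)
    have "(\<lambda>n. cl (q n (snd p))) \<longlonglongrightarrow> cl (snd p)"
      by (rule continuous_on_tendsto_compose[OF clc q_lim]) auto
    then show "(\<lambda>n. fa n p) \<longlonglongrightarrow> fl p" unfolding fa_def fl_def
    proof (intro continuous_on_tendsto_compose[OF cont[OF w]])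
      show "cl (snd p) \<in> {0..t}" by (rule cl01)
      show "\<forall>\<^sub>F n in sequentially. cl (q n (snd p)) \<in> {0..t}" by (intro always_eventually allI cl01)
    qed
  qed
  have int_meas: "(\<lambda>\<omega>. LINT s|lborel. indicator {0..t} s *\<^sub>R f (cl s) \<omega>) \<in> borel_measurable N"
  proof (rule lborel.borel_measurable_lebesgue_integral)
    show "(\<lambda>(\<omega>, s). indicator {0..t} s *\<^sub>R f (cl s) \<omega>) \<in> borel_measurable (N \<Otimes>\<^sub>M lborel)"
      using fl_meas unfolding fl_def split_beta' by measurable
  qed
  have eq: "integral {0..t} (\<lambda>s. f s \<omega>) = (LINT s|lborel. indicator {0..t} s *\<^sub>R f (cl s) \<omega>)"
    if w: "\<omega> \<in> space N" for \<omega>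
  proof -
    have c2: "continuous_on {0..t} (\<lambda>s. f (cl s) \<omega>)"
      using cont[OF w] by (rule continuous_on_eq) (simp add: cl_id)
    have "(LINT s:{0..t}|lborel. f (cl s) \<omega>) = integral {0..t} (\<lambda>s. f (cl s) \<omega>)"
      by (rule set_borel_integral_eq_integral(2)[OF borel_integrable_atLeastAtMost'[OF c2]])
    also have "\<dots> = integral {0..t} (\<lambda>s. f s \<omega>)" by (rule integral_cong) (simp add: cl_id)
    finally show ?thesis by (simp add: set_lebesgue_integral_def)
  qed
  show ?thesis using int_meas by (subst measurable_cong[OF eq]) auto
qed

definition Nf :: "'w measure \<Rightarrow> (real \<Rightarrow> 'w \<Rightarrow> 'a::euclidean_space) \<Rightarrow> real \<Rightarrow> 'w measure" where
  "Nf M B t = sigma (space M) ({B s -` A \<inter> space M | s A. 0 \<le> s \<and> s \<le> t \<and> A \<in> sets borel} \<union> null_sets M)"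

lemma Nf_gens: "{B s -` A \<inter> space M | s A. 0 \<le> s \<and> s \<le> t \<and> A \<in> sets borel} \<union> null_sets M \<subseteq> Pow (space M)"
  using sets.sets_into_space by auto

lemma space_Nf[simp]: "space (Nf M B t) = space M"
  unfolding Nf_def by (rule space_measure_of[OF Nf_gens])

lemma sets_Nf: "sets (Nf M B t) = BM_filtration M B t"
  unfolding Nf_def BM_filtration_def by (rule sets_measure_of[OF Nf_gens])

lemma Nf_mono:
  assumes st: "s \<le> t" and f: "f \<in> borel_measurable (Nf M B s)"
  shows "f \<in> borel_measurable (Nf M B t)"
proof -
  have "sets (Nf M B s) \<subseteq> sets (Nf M B t)"
    unfolding Nf_def sets_measure_of[OF Nf_gens]
  proof (rule sigma_sets_mono, rule subsetI)
    fix X assume "X \<in> {B s' -` A \<inter> space M | s' A. 0 \<le> s' \<and> s' \<le> s \<and> A \<in> sets borel} \<union> null_sets M"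
    then consider (a) s' A where "X = B s' -` A \<inter> space M" "0 \<le> s'" "s' \<le> s" "A \<in> sets borel"
      | (b) "X \<in> null_sets M" by blast
    then have "X \<in> {B s' -` A \<inter> space M | s' A. 0 \<le> s' \<and> s' \<le> t \<and> A \<in> sets borel} \<union> null_sets M"
    proof cases
      case (a s' A)
      then have "s' \<le> t" using st by linarith
      then show ?thesis using a by blast
    qed simp
    then show "X \<in> sigma_sets (space M) ({B s' -` A \<inter> space M | s' A. 0 \<le> s' \<and> s' \<le> t \<and> A \<in> sets borel} \<union> null_sets M)"
      by (rule sigma_sets.Basic)
  qed
  then show ?thesis using measurable_mono[of borel borel "Nf M B s" "Nf M B t"] f by auto
qed

lemma B_Nf:
  fixes B :: "real \<Rightarrow> 'w \<Rightarrow> 'a::euclidean_space"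
  assumes "0 \<le> s" "s \<le> t"
  shows "B s \<in> borel_measurable (Nf M B t)"
proof (rule measurableI)
  fix A :: "'a set" assume "A \<in> sets borel"
  then show "B s -` A \<inter> space (Nf M B t) \<in> sets (Nf M B t)"
    unfolding space_Nf Nf_def sets_measure_of[OF Nf_gens]
    by (intro sigma_sets.Basic UnI1 CollectI exI[of _ s] exI[of _ A] conjI refl) (use assms \<open>A \<in> sets borel\<close> in \<open>auto simp: space_measure_of[OF Nf_gens]\<close>)
qed auto

lemma pic_meas:
  fixes B :: "real \<Rightarrow> 'w \<Rightarrow> 'a::euclidean_space"
  assumes pic_ok: "\<And>\<omega>. \<omega> \<in> space M \<Longrightarrow> picard g F r L (\<lambda>s. B s \<omega>)"
    and Fc: "continuous_on UNIV F"
  shows "0 \<le> t \<Longrightarrow> (\<lambda>\<omega>. pic g F x mb r (\<lambda>s. B s \<omega>) k t) \<in> borel_measurable (Nf M B t)"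
proof (induction k arbitrary: t)
  case 0
  then show ?case by simp
next
  case (Suc k)
  have t: "0 \<le> t" by fact
  have mavg_m: "(\<lambda>\<omega>. mavg r mb (pic g F x mb r (\<lambda>s. B s \<omega>) k) s) \<in> borel_measurable (Nf M B s)"
    if s: "0 \<le> s" for s
  proof -
    have "(\<lambda>\<omega>. integral {0..s} (\<lambda>u. pic g F x mb r (\<lambda>s. B s \<omega>) k u)) \<in> borel_measurable (Nf M B s)"
    proof (rule integral_measurable)
      show "(\<lambda>\<omega>. pic g F x mb r (\<lambda>s. B s \<omega>) k u) \<in> borel_measurable (Nf M B s)" if "u \<in> {0..s}" for u
        using that by (intro Nf_mono[OF _ Suc.IH]) auto
      show "continuous_on {0..s} (\<lambda>u. pic g F x mb r (\<lambda>s. B s \<omega>) k u)" if "\<omega> \<in> space (Nf M B s)" for \<omega>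
        using picard.P_cont[OF pic_ok] that by simp
    qed
    then show ?thesis unfolding mavg_def by (intro borel_measurable_scaleR borel_measurable_const borel_measurable_add)
  qed
  have "(\<lambda>\<omega>. integral {0..t} (\<lambda>s. g s *\<^sub>R F (pic g F x mb r (\<lambda>s. B s \<omega>) k s
          - mavg r mb (pic g F x mb r (\<lambda>s. B s \<omega>) k) s))) \<in> borel_measurable (Nf M B t)"
  proof (rule integral_measurable)
    fix s assume s: "s \<in> {0..t}"
    have "(\<lambda>\<omega>. pic g F x mb r (\<lambda>s. B s \<omega>) k s - mavg r mb (pic g F x mb r (\<lambda>s. B s \<omega>) k) s)
        \<in> borel_measurable (Nf M B s)"
      using Suc.IH[of s] mavg_m[of s] s by (intro borel_measurable_diff) auto
    then have m: "(\<lambda>\<omega>. g s *\<^sub>R F (pic g F x mb r (\<lambda>s. B s \<omega>) k s - mavg r mb (pic g F x mb r (\<lambda>s. B s \<omega>) k) s))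
        \<in> borel_measurable (Nf M B s)"
      by (intro borel_measurable_scaleR borel_measurable_const borel_measurable_continuous_on[OF Fc])
    show "(\<lambda>\<omega>. g s *\<^sub>R F (pic g F x mb r (\<lambda>s. B s \<omega>) k s - mavg r mb (pic g F x mb r (\<lambda>s. B s \<omega>) k) s))
        \<in> borel_measurable (Nf M B t)"
      using s Nf_mono[OF _ m, of t] by auto
  next
    fix \<omega> assume "\<omega> \<in> space (Nf M B t)"
    then show "continuous_on {0..t} (\<lambda>s. g s *\<^sub>R F (pic g F x mb r (\<lambda>s. B s \<omega>) k s - mavg r mb (pic g F x mb r (\<lambda>s. B s \<omega>) k) s))"
      using picard.integrand_cont[OF pic_ok] by simp
  qed
  moreover have "B t \<in> borel_measurable (Nf M B t)" using t by (intro B_Nf) auto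
  ultimately show ?case unfolding pic.simps Gam_def
    by (intro borel_measurable_diff borel_measurable_add borel_measurable_const)
qed

lemma sol_meas:
  fixes B :: "real \<Rightarrow> 'w \<Rightarrow> 'a::euclidean_space"
  assumes pic_ok: "\<And>\<omega>. \<omega> \<in> space M \<Longrightarrow> picard g F r L (\<lambda>s. B s \<omega>)"
    and Fc: "continuous_on UNIV F" and t: "0 \<le> t"
  shows "(\<lambda>\<omega>. sol g F x mb r (\<lambda>s. B s \<omega>) t) \<in> borel_measurable (Nf M B t)"
proof (rule borel_measurable_LIMSEQ_metric[OF pic_meas[OF pic_ok Fc t]])
  fix \<omega> assume "\<omega> \<in> space (Nf M B t)"
  then show "(\<lambda>i. pic g F x mb r (\<lambda>s. B s \<omega>) i t) \<longlonglongrightarrow> sol g F x mb r (\<lambda>s. B s \<omega>) t"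
    using picard.P_lim[OF pic_ok t] by simp
qed auto




lemma Gam_congF:
  assumes "\<And>s. s \<in> {0..t} \<Longrightarrow> F1 (X s - mavg r mb X s) = F2 (X s - mavg r mb X s)"
  shows "Gam g F1 x mb r b X t = Gam g F2 x mb r b X t"
proof -
  have "integral {0..t} (\<lambda>s. g s *\<^sub>R F1 (X s - mavg r mb X s)) = integral {0..t} (\<lambda>s. g s *\<^sub>R F2 (X s - mavg r mb X s))"
    by (rule integral_cong) (simp add: assms)
  then show ?thesis unfolding Gam_def by simp
qed

lemma Gam_congX:
  assumes "\<And>s. s \<in> {0..t} \<Longrightarrow> X s = Y s"
  shows "Gam g F x mb r b X t = Gam g F x mb r b Y t"
proof -
  have "integral {0..t} (\<lambda>s. g s *\<^sub>R F (X s - mavg r mb X s)) = integral {0..t} (\<lambda>s. g s *\<^sub>R F (Y s - mavg r mb Y s))"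
  proof (rule integral_cong)
    fix s assume s: "s \<in> {0..t}"
    have "mavg r mb X s = mavg r mb Y s" by (rule integral_mavg_cong) (use assms s in auto)
    then show "g s *\<^sub>R F (X s - mavg r mb X s) = g s *\<^sub>R F (Y s - mavg r mb Y s)" using assms[OF s] by simp
  qed
  then show ?thesis unfolding Gam_def by simp
qed

lemma cont_halfline:
  fixes f :: "real \<Rightarrow> 'b::topological_space"
  assumes "\<And>T. 0 \<le> T \<Longrightarrow> continuous_on {0..T} f"
  shows "continuous_on {0..} f"
  unfolding continuous_on_eq_continuous_within
proof
  fix t :: real assume "t \<in> {0..}"
  then have t: "0 \<le> t" by simp
  have "continuous (at t within {0..t+1}) f"
    using assms[of "t+1"] t unfolding continuous_on_eq_continuous_within by auto
  moreover have "at t within {0..} = at t within {0..t+1}"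
    by (rule at_within_nhd[where S="{..<t+1}"]) auto
  ultimately show "continuous (at t within {0..}) f" by simp
qed

context pot
begin

lemma picard_Ftr:
  assumes "r > 0" "continuous_on {0..} g" "\<And>t. t \<ge> 0 \<Longrightarrow> g t \<ge> 0" "continuous_on {0..} b" "0 \<le> R"
  shows "\<exists>L. picard g (Ftr R) r L b"
proof -
  obtain L where "L \<ge> 0" "\<forall>y z. norm (Ftr R y - Ftr R z) \<le> L * norm (y - z)" using Ftr_lip[OF assms(5)] by blast
  then show ?thesis using assms by (intro exI[of _ L]) (unfold_locales, auto)
qed

lemma pathwise:
  fixes g :: "real \<Rightarrow> real" and x mb :: 'a and r gm T :: real and b :: "real \<Rightarrow> 'a"
  assumes r: "r > 0" and gc: "continuous_on {0..} g" and gm: "0 < gm" "\<And>t. t \<ge> 0 \<Longrightarrow> gm \<le> g t"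
    and bc: "continuous_on {0..} b" and T: "0 \<le> T"
  shows "\<exists>n0::nat. (\<forall>n\<ge>n0. \<forall>t\<in>{0..T}. sol g (Ftr (real n)) x mb r b t = sol g (Ftr (real n0)) x mb r b t)
      \<and> (\<forall>t\<in>{0..T}. sol g (Ftr (real n0)) x mb r b t = Gam g DV x mb r b (sol g (Ftr (real n0)) x mb r b) t)
      \<and> continuous_on {0..} (sol g (Ftr (real n0)) x mb r b)
      \<and> (\<forall>Y. continuous_on {0..T} Y \<longrightarrow> (\<forall>t\<in>{0..T}. Y t = Gam g DV x mb r b Y t) \<longrightarrow>
            (\<forall>t\<in>{0..T}. Y t = sol g (Ftr (real n0)) x mb r b t))"
proof -
  have gnn: "\<And>t. t \<ge> 0 \<Longrightarrow> g t \<ge> 0" using gm by (metis less_le_trans less_imp_le)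
  obtain Kb where Kb: "Kb > 0" "\<And>R X. Kb \<le> R \<Longrightarrow> continuous_on {0..T} X \<Longrightarrow>
     (\<forall>t\<in>{0..T}. X t = Gam g (Ftr R) x mb r b X t) \<Longrightarrow> (\<forall>t\<in>{0..T}. norm (X t - mavg r mb X t) < Kb)"
    using apriori[OF r gc gm bc T, of x mb] by blast
  define n0 where "n0 = nat \<lceil>Kb\<rceil>"
  have n0: "Kb \<le> real n0" unfolding n0_def by linarith
  define So where "So R = sol g (Ftr R) x mb r b" for R
  have solR: "continuous_on {0..} (So R) \<and>
      (\<forall>t\<in>{0..T}. \<forall>R'. Kb \<le> R' \<longrightarrow> So R t = Gam g (Ftr R') x mb r b (So R) t) \<and>
      (\<forall>t\<in>{0..T}. So R t = Gam g DV x mb r b (So R) t)" if R: "Kb \<le> R" for R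
  proof -
    have R0: "0 \<le> R" using R Kb by simp
    obtain L where pl: "picard g (Ftr R) r L b" using picard_Ftr[OF r gc gnn bc R0] by blast
    interpret p: picard g "Ftr R" x mb r L b by (rule pl)
    have c: "continuous_on {0..T'} (So R)" for T' unfolding So_def by (rule p.S_cont)
    have fx: "\<forall>t\<in>{0..T}. So R t = Gam g (Ftr R) x mb r b (So R) t"
      unfolding So_def using p.S_fix by auto
    have bnd: "\<forall>t\<in>{0..T}. norm (So R t - mavg r mb (So R) t) < Kb" by (rule Kb(2)[OF R c fx])
    have eqF: "Gam g (Ftr R) x mb r b (So R) t = Gam g F2 x mb r b (So R) t"
      if t: "t \<in> {0..T}" and F2: "\<And>z. norm z < Kb \<Longrightarrow> F2 z = DV z" for t F2
    proof (rule Gam_congF)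
      fix s assume s: "s \<in> {0..t}"
      then have "norm (So R s - mavg r mb (So R) s) < Kb" using bnd t by auto
      then show "Ftr R (So R s - mavg r mb (So R) s) = F2 (So R s - mavg r mb (So R) s)"
        using Ftr_eq[of _ R] F2 R by simp
    qed
    show ?thesis
    proof (intro conjI ballI allI impI)
      show "continuous_on {0..} (So R)" by (rule cont_halfline[OF c])
    next
      fix t R' assume t: "t \<in> {0..T}" and R': "Kb \<le> R'"
      have "So R t = Gam g (Ftr R) x mb r b (So R) t" using fx t by auto
      also have "\<dots> = Gam g (Ftr R') x mb r b (So R) t"
        by (rule eqF[OF t]) (use Ftr_eq R' in auto)
      finally show "So R t = Gam g (Ftr R') x mb r b (So R) t" .
    next
      fix t assume t: "t \<in> {0..T}"
      have "So R t = Gam g (Ftr R) x mb r b (So R) t" using fx t by auto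
      also have "\<dots> = Gam g DV x mb r b (So R) t" by (rule eqF[OF t]) auto
      finally show "So R t = Gam g DV x mb r b (So R) t" .
    qed
  qed
  show ?thesis
  proof (intro exI[of _ n0] conjI allI impI ballI)
    fix n t assume n: "n0 \<le> n" and t: "t \<in> {0..T}"
    have Rn: "Kb \<le> real n" using n0 n by simp
    obtain L where pl: "picard g (Ftr (real n)) r L b" using picard_Ftr[OF r gc gnn bc, of "real n"] by auto
    interpret p: picard g "Ftr (real n)" x mb r L b by (rule pl)
    show "sol g (Ftr (real n)) x mb r b t = sol g (Ftr (real n0)) x mb r b t"
    proof (rule p.uniq[OF _ _ _ _ t])
      show "continuous_on {0..T} (sol g (Ftr (real n)) x mb r b)" by (rule p.S_cont)
      show "continuous_on {0..T} (sol g (Ftr (real n0)) x mb r b)"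
        using solR[OF n0] unfolding So_def by (auto intro: continuous_on_subset)
      show "sol g (Ftr (real n)) x mb r b s = Gam g (Ftr (real n)) x mb r b (sol g (Ftr (real n)) x mb r b) s"
        if "s \<in> {0..T}" for s
        using solR[OF Rn] that Rn unfolding So_def by blast
      show "sol g (Ftr (real n0)) x mb r b s = Gam g (Ftr (real n)) x mb r b (sol g (Ftr (real n0)) x mb r b) s"
        if "s \<in> {0..T}" for s
        using solR[OF n0] that Rn unfolding So_def by blast
    qed
  next
    fix t assume "t \<in> {0..T}"
    then show "sol g (Ftr (real n0)) x mb r b t = Gam g DV x mb r b (sol g (Ftr (real n0)) x mb r b) t"
      using solR[OF n0] unfolding So_def by blast
  next
    show "continuous_on {0..} (sol g (Ftr (real n0)) x mb r b)"
      using solR[OF n0] unfolding So_def by blast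
  next
    fix Y t assume Yc: "continuous_on {0..T} Y" and Yeq: "\<forall>t\<in>{0..T}. Y t = Gam g DV x mb r b Y t"
      and t: "t \<in> {0..T}"
    obtain RY where RY: "RY \<ge> 0" "\<forall>s\<in>{0..T}. norm (Y s - mavg r mb Y s) \<le> RY"
      using cont_bound[OF continuous_on_diff[OF Yc cont_mavg[OF Yc r]]] by blast
    define R where "R = max (real n0) RY"
    have R: "Kb \<le> R" "0 \<le> R" using n0 Kb unfolding R_def by auto
    obtain L where pl: "picard g (Ftr R) r L b" using picard_Ftr[OF r gc gnn bc R(2)] by auto
    interpret p: picard g "Ftr R" x mb r L b by (rule pl)
    show "Y t = sol g (Ftr (real n0)) x mb r b t"
    proof (rule p.uniq[OF Yc _ _ _ t])
      show "continuous_on {0..T} (sol g (Ftr (real n0)) x mb r b)"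
        using solR[OF n0] unfolding So_def by (auto intro: continuous_on_subset)
      show "Y s = Gam g (Ftr R) x mb r b Y s" if s: "s \<in> {0..T}" for s
      proof -
        have "Y s = Gam g DV x mb r b Y s" using Yeq s by auto
        also have "\<dots> = Gam g (Ftr R) x mb r b Y s"
        proof (rule Gam_congF)
          fix u assume "u \<in> {0..s}"
          then have "norm (Y u - mavg r mb Y u) \<le> R" using RY s unfolding R_def by force
          then show "DV (Y u - mavg r mb Y u) = Ftr R (Y u - mavg r mb Y u)" using Ftr_eq by simp
        qed
        finally show ?thesis .
      qed
      show "sol g (Ftr (real n0)) x mb r b s = Gam g (Ftr R) x mb r b (sol g (Ftr (real n0)) x mb r b) s"
        if "s \<in> {0..T}" for s
        using solR[OF n0] that R unfolding So_def by blast
    qed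
  qed
qed

end

theorem mainTheorem9:
  fixes V W chi :: "'a::euclidean_space \<Rightarrow> real"
    and DV DW Dchi :: "'a \<Rightarrow> 'a"
    and HV HW :: "'a \<Rightarrow> 'a \<Rightarrow>\<^sub>L 'a"
    and g g' :: "real \<Rightarrow> real"
    and \<mu> :: "'a measure"
    and M :: "'w measure"
    and B :: "real \<Rightarrow> 'w \<Rightarrow> 'a"
    and x :: 'a and r c a :: real
  assumes V_nonneg: "\<And>y. V y \<ge> 0"
    and V_grad: "\<And>y. (V has_derivative (\<lambda>h. DV y \<bullet> h)) (at y)"
    and V_hess: "\<And>y. (DV has_derivative blinfun_apply (HV y)) (at y)"
    and V_C2: "continuous_on UNIV HV"
    and V_split: "\<And>y. V y = W y + chi y"
    and chi_supp: "compact (closure {y. chi y \<noteq> 0})"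
    and chi_grad: "\<And>y. (chi has_derivative (\<lambda>h. Dchi y \<bullet> h)) (at y)"
    and chi_lip: "\<exists>L. \<forall>y z. norm (Dchi y - Dchi z) \<le> L * dist y z"
    and W_grad: "\<And>y. (W has_derivative (\<lambda>h. DW y \<bullet> h)) (at y)"
    and W_hess: "\<And>y. (DW has_derivative blinfun_apply (HW y)) (at y)"
    and c_pos: "c > 0"
    and W_convex: "\<And>y h. blinfun_apply (HW y) h \<bullet> h \<ge> c * (norm h)\<^sup>2"
    and a_pos: "a > 0"
    and lap_bound: "\<And>y. (\<Sum>b\<in>Basis. blinfun_apply (HV y) b \<bullet> b) \<le> a * (1 + V y)"
    and grad_growth: "filterlim (\<lambda>y. (norm (DV y))\<^sup>2 / V y) at_top at_infinity"
    and crit_finite: "finite {y. DV y = 0}"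
    and min_nondeg: "\<And>y. DV y = 0 \<Longrightarrow> local_min V y \<Longrightarrow>
                        (\<forall>h. h \<noteq> 0 \<longrightarrow> blinfun_apply (HV y) h \<bullet> h > 0)"
    and saddle_neg: "\<And>y. DV y = 0 \<Longrightarrow> \<not> local_min V y \<Longrightarrow>
                        (\<exists>lam<0. \<exists>v. v \<noteq> 0 \<and> blinfun_apply (HV y) v = lam *\<^sub>R v)"
    and g_C1: "\<And>t. t \<ge> 0 \<Longrightarrow> (g has_real_derivative g' t) (at t within {0..})"
    and g'_cont: "continuous_on {0..} g'"
    and g_pos: "\<And>t. t \<ge> 0 \<Longrightarrow> g t > 0"
    and g_mono: "mono_on {0..} g"
    and mu_prob: "prob_space \<mu>"
    and mu_borel: "sets \<mu> = sets borel"
    and mu_mean: "integrable \<mu> (\<lambda>y. y)"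
    and r_pos: "r > 0"
    and BM: "std_BM M B"
  shows "\<exists>X. strong_solution M B g DV x (integral\<^sup>L \<mu> (\<lambda>y. y)) r X \<and>
             (\<forall>Y. strong_solution M B g DV x (integral\<^sup>L \<mu> (\<lambda>y. y)) r Y \<longrightarrow>
                  (AE \<omega> in M. \<forall>t\<ge>0. X t \<omega> = Y t \<omega>))"
proof -
  interpret P: pot V W chi DV DW Dchi HV HW c
    by (rule pot.intro) (use V_grad V_hess V_C2 V_split chi_supp chi_grad chi_lip W_grad W_hess c_pos W_convex in auto)
  define mb where "mb = integral\<^sup>L \<mu> (\<lambda>y. y)"
  have gc: "continuous_on {0..} g"
    unfolding continuous_on_eq_continuous_within using g_C1 by (auto intro: DERIV_continuous)
  have g0: "0 < g 0" using g_pos by simp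
  have gmono: "g 0 \<le> g t" if "t \<ge> 0" for t using mono_onD[OF g_mono, of 0 t] that by auto
  have gnn: "g t \<ge> 0" if "t \<ge> 0" for t using g_pos[OF that] by simp
  have bc: "continuous_on {0..} (\<lambda>t. B t \<omega>)" if "\<omega> \<in> space M" for \<omega>
    using BM that unfolding std_BM_def by auto
  define X where "X = (\<lambda>t \<omega>. lim (\<lambda>n::nat. sol g (P.Ftr (real n)) x mb r (\<lambda>s. B s \<omega>) t))"
  have KF: "\<exists>n0::nat. (\<forall>t\<in>{0..T}. X t \<omega> = sol g (P.Ftr (real n0)) x mb r (\<lambda>s. B s \<omega>) t)
      \<and> (\<forall>t\<in>{0..T}. ((\<lambda>n. sol g (P.Ftr (real n)) x mb r (\<lambda>s. B s \<omega>) t) \<longlonglongrightarrow> X t \<omega>))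
      \<and> (\<forall>t\<in>{0..T}. sol g (P.Ftr (real n0)) x mb r (\<lambda>s. B s \<omega>) t
            = Gam g DV x mb r (\<lambda>s. B s \<omega>) (sol g (P.Ftr (real n0)) x mb r (\<lambda>s. B s \<omega>)) t)
      \<and> continuous_on {0..} (sol g (P.Ftr (real n0)) x mb r (\<lambda>s. B s \<omega>))
      \<and> (\<forall>Y. continuous_on {0..T} Y \<longrightarrow> (\<forall>t\<in>{0..T}. Y t = Gam g DV x mb r (\<lambda>s. B s \<omega>) Y t) \<longrightarrow>
            (\<forall>t\<in>{0..T}. Y t = sol g (P.Ftr (real n0)) x mb r (\<lambda>s. B s \<omega>) t))"
    if w: "\<omega> \<in> space M" and T: "0 \<le> T" for \<omega> T
  proof -
    obtain n0 where n0: "\<forall>n\<ge>n0. \<forall>t\<in>{0..T}. sol g (P.Ftr (real n)) x mb r (\<lambda>s. B s \<omega>) t = sol g (P.Ftr (real n0)) x mb r (\<lambda>s. B s \<omega>) t"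
      "\<forall>t\<in>{0..T}. sol g (P.Ftr (real n0)) x mb r (\<lambda>s. B s \<omega>) t
            = Gam g DV x mb r (\<lambda>s. B s \<omega>) (sol g (P.Ftr (real n0)) x mb r (\<lambda>s. B s \<omega>)) t"
      "continuous_on {0..} (sol g (P.Ftr (real n0)) x mb r (\<lambda>s. B s \<omega>))"
      "\<forall>Y. continuous_on {0..T} Y \<longrightarrow> (\<forall>t\<in>{0..T}. Y t = Gam g DV x mb r (\<lambda>s. B s \<omega>) Y t) \<longrightarrow>
            (\<forall>t\<in>{0..T}. Y t = sol g (P.Ftr (real n0)) x mb r (\<lambda>s. B s \<omega>) t)"
      using P.pathwise[OF r_pos gc g0 gmono bc[OF w] T, where x=x and mb=mb] by blast
    have lim: "(\<lambda>n. sol g (P.Ftr (real n)) x mb r (\<lambda>s. B s \<omega>) t) \<longlonglongrightarrow> sol g (P.Ftr (real n0)) x mb r (\<lambda>s. B s \<omega>) t"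
      if t: "t \<in> {0..T}" for t
    proof (rule tendsto_eventually, rule eventually_sequentiallyI[of n0])
      fix n :: nat assume "n0 \<le> n"
      then show "sol g (P.Ftr (real n)) x mb r (\<lambda>s. B s \<omega>) t = sol g (P.Ftr (real n0)) x mb r (\<lambda>s. B s \<omega>) t"
        using n0(1) t by blast
    qed
    have Xe: "X t \<omega> = sol g (P.Ftr (real n0)) x mb r (\<lambda>s. B s \<omega>) t" if t: "t \<in> {0..T}" for t
      unfolding X_def using lim[OF t] by (rule limI)
    have A: "\<forall>t\<in>{0..T}. X t \<omega> = sol g (P.Ftr (real n0)) x mb r (\<lambda>s. B s \<omega>) t" using Xe by blast
    have Bq: "\<forall>t\<in>{0..T}. ((\<lambda>n. sol g (P.Ftr (real n)) x mb r (\<lambda>s. B s \<omega>) t) \<longlonglongrightarrow> X t \<omega>)"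
    proof
      fix t assume t: "t \<in> {0..T}"
      show "(\<lambda>n. sol g (P.Ftr (real n)) x mb r (\<lambda>s. B s \<omega>) t) \<longlonglongrightarrow> X t \<omega>"
        unfolding Xe[OF t] by (rule lim[OF t])
    qed
    show ?thesis
      by (intro exI[of _ n0] conjI A Bq n0(2) n0(3) n0(4))
  qed
  have pic_ok: "\<exists>L. \<forall>\<omega>\<in>space M. picard g (P.Ftr (real n)) r L (\<lambda>s. B s \<omega>)" for n
  proof -
    obtain L where L: "L \<ge> 0" "\<forall>y z. norm (P.Ftr (real n) y - P.Ftr (real n) z) \<le> L * norm (y - z)"
      using P.Ftr_lip[of "real n"] by auto
    show ?thesis
      by (intro exI[of _ L] ballI picard.intro) (use L r_pos gc gnn bc in auto)
  qed
  have Xmeas: "X t \<in> borel_measurable (Nf M B t)" if t: "0 \<le> t" for t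
  proof (rule borel_measurable_LIMSEQ_metric)
    fix n :: nat
    obtain L where L: "\<forall>\<omega>\<in>space M. picard g (P.Ftr (real n)) r L (\<lambda>s. B s \<omega>)" using pic_ok by blast
    show "(\<lambda>\<omega>. sol g (P.Ftr (real n)) x mb r (\<lambda>s. B s \<omega>) t) \<in> borel_measurable (Nf M B t)"
      by (rule sol_meas[OF _ P.Ftr_cont t]) (use L in auto)
  next
    fix \<omega> assume "\<omega> \<in> space (Nf M B t)"
    then have w: "\<omega> \<in> space M" by simp
    show "(\<lambda>n. sol g (P.Ftr (real n)) x mb r (\<lambda>s. B s \<omega>) t) \<longlonglongrightarrow> X t \<omega>"
      using KF[OF w t] t by auto
  qed
  have Xsol: "X t \<omega> = Gam g DV x mb r (\<lambda>s. B s \<omega>) (\<lambda>t. X t \<omega>) t" if w: "\<omega> \<in> space M" and t: "0 \<le> t" for \<omega> t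
  proof -
    obtain n0 where n0: "\<forall>s\<in>{0..t}. X s \<omega> = sol g (P.Ftr (real n0)) x mb r (\<lambda>s. B s \<omega>) s"
      "\<forall>s\<in>{0..t}. sol g (P.Ftr (real n0)) x mb r (\<lambda>s. B s \<omega>) s
            = Gam g DV x mb r (\<lambda>s. B s \<omega>) (sol g (P.Ftr (real n0)) x mb r (\<lambda>s. B s \<omega>)) s"
      using KF[OF w t] by blast
    have "X t \<omega> = sol g (P.Ftr (real n0)) x mb r (\<lambda>s. B s \<omega>) t" using n0(1) t by auto
    also have "\<dots> = Gam g DV x mb r (\<lambda>s. B s \<omega>) (sol g (P.Ftr (real n0)) x mb r (\<lambda>s. B s \<omega>)) t"
      using n0(2) t by auto
    also have "\<dots> = Gam g DV x mb r (\<lambda>s. B s \<omega>) (\<lambda>t. X t \<omega>) t"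
      by (rule Gam_congX) (use n0(1) t in auto)
    finally show ?thesis .
  qed
  have Xcont: "continuous_on {0..} (\<lambda>t. X t \<omega>)" if w: "\<omega> \<in> space M" for \<omega>
  proof (rule cont_halfline)
    fix T :: real assume T: "0 \<le> T"
    obtain n0 where n0: "\<forall>s\<in>{0..T}. X s \<omega> = sol g (P.Ftr (real n0)) x mb r (\<lambda>s. B s \<omega>) s"
      "continuous_on {0..} (sol g (P.Ftr (real n0)) x mb r (\<lambda>s. B s \<omega>))"
      using KF[OF w T] by blast
    show "continuous_on {0..T} (\<lambda>t. X t \<omega>)"
      by (rule continuous_on_eq[OF continuous_on_subset[OF n0(2)]]) (use n0(1) in auto)
  qed
  have Gam_unf: "Gam g DV x mb r (\<lambda>s. B s \<omega>) (\<lambda>t. Y t \<omega>) t =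
      x + B t \<omega> - integral {0..t} (\<lambda>s. g s *\<^sub>R DV (Y s \<omega> - (1 / (r + s)) *\<^sub>R (r *\<^sub>R mb + integral {0..s} (\<lambda>u. Y u \<omega>))))"
    for Y :: "real \<Rightarrow> 'w \<Rightarrow> 'a" and \<omega> t
    unfolding Gam_def mavg_def by simp
  show ?thesis
    unfolding mb_def[symmetric]
  proof (intro exI[of _ X] conjI allI impI)
    show "strong_solution M B g DV x mb r X"
      unfolding strong_solution_def
    proof (intro conjI ballI allI impI)
      fix \<omega> assume "\<omega> \<in> space M"
      then show "continuous_on {0..} (\<lambda>t. X t \<omega>)" by (rule Xcont)
    next
      fix t :: real and A :: "'a set" assume t: "0 \<le> t" and A: "A \<in> sets borel"
      from measurable_sets[OF Xmeas[OF t] A]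
      show "X t -` A \<inter> space M \<in> BM_filtration M B t" by (simp add: sets_Nf)
    next
      show "AE \<omega> in M. \<forall>t\<ge>0. X t \<omega> = x + B t \<omega> - integral {0..t} (\<lambda>s. g s *\<^sub>R DV (X s \<omega> -
             (1 / (r + s)) *\<^sub>R (r *\<^sub>R mb + integral {0..s} (\<lambda>u. X u \<omega>))))"
        by (rule AE_I2) (use Xsol Gam_unf in auto)
    qed
  next
    fix Y assume Y: "strong_solution M B g DV x mb r Y"
    have Yc: "\<And>\<omega>. \<omega> \<in> space M \<Longrightarrow> continuous_on {0..} (\<lambda>t. Y t \<omega>)" using Y unfolding strong_solution_def by blast
    have Yae: "AE \<omega> in M. \<forall>t\<ge>0. Y t \<omega> = x + B t \<omega> - integral {0..t} (\<lambda>s. g s *\<^sub>R DV (Y s \<omega> -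
             (1 / (r + s)) *\<^sub>R (r *\<^sub>R mb + integral {0..s} (\<lambda>u. Y u \<omega>))))"
      using Y unfolding strong_solution_def by blast
    show "AE \<omega> in M. \<forall>t\<ge>0. X t \<omega> = Y t \<omega>"
    proof (rule AE_mp[OF Yae AE_I2], rule impI)
      fix \<omega> assume w: "\<omega> \<in> space M" and eq: "\<forall>t\<ge>0. Y t \<omega> = x + B t \<omega> - integral {0..t} (\<lambda>s. g s *\<^sub>R DV (Y s \<omega> -
             (1 / (r + s)) *\<^sub>R (r *\<^sub>R mb + integral {0..s} (\<lambda>u. Y u \<omega>))))"
      show "\<forall>t\<ge>0. X t \<omega> = Y t \<omega>"
      proof (intro allI impI)
        fix t :: real assume t: "0 \<le> t"
        obtain n0 where n0: "\<forall>s\<in>{0..t}. X s \<omega> = sol g (P.Ftr (real n0)) x mb r (\<lambda>s. B s \<omega>) s"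
          "\<forall>Z. continuous_on {0..t} Z \<longrightarrow> (\<forall>s\<in>{0..t}. Z s = Gam g DV x mb r (\<lambda>s. B s \<omega>) Z s) \<longrightarrow>
            (\<forall>s\<in>{0..t}. Z s = sol g (P.Ftr (real n0)) x mb r (\<lambda>s. B s \<omega>) s)"
          using KF[OF w t] by blast
        have "continuous_on {0..t} (\<lambda>s. Y s \<omega>)" by (rule continuous_on_subset[OF Yc[OF w]]) auto
        moreover have "\<forall>s\<in>{0..t}. Y s \<omega> = Gam g DV x mb r (\<lambda>s. B s \<omega>) (\<lambda>s. Y s \<omega>) s"
          using eq Gam_unf[of \<omega> Y] by auto
        ultimately have "\<forall>s\<in>{0..t}. Y s \<omega> = sol g (P.Ftr (real n0)) x mb r (\<lambda>s. B s \<omega>) s"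
          using n0(2) by blast
        then show "X t \<omega> = Y t \<omega>" using n0(1) t by auto
      qed
    qed
  qed
qed



end
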